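(* Every endotactic reaction network is consistent.
   Context: A reaction network (E-graph) $\mathcal{G}=(\mathcal{V},\mathcal{E})$ is a finite directed graph whose nodes are distinct elements of a finite set $Y\subset\mathbb{R}^d_{\ge 0}$, with $\mathcal{V}\neq\emptyset$, every node incident to at least one edge, and no edge from a node to itself. For an edge $e$, $\mathbf{s}(e)$ is its source node, $\mathbf{t}(e)$ its target, $\mathbf{v}(e)=\mathbf{t}(e)-\mathbf{s}(e)$. $\mathcal{G}$ is consistent if there exist $a_e>0$, $e\in\mathcal{E}$, with $\sum_{e\in\mathcal{E}}a_e\mathbf{v}(e)=\mathbf{0}$. $\mathcal{G}$ is endotactic if for every $\mathbf{w}\in\mathbb{R}^d$ and $e_i\in\mathcal{E}$ with $\mathbf{w}\cdot\mathbf{v}(e_i)<0$ there exists $e_j\in\mathcal{E}$ with $\mathbf{w}\cdot(\mathbf{s}(e_j)-\mathbf{s}(e_i))<0$ and $\mathbf{w}\cdot\mathbf{v}(e_j)>0$. *)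

theory Defs
  imports "HOL-Analysis.Analysis"
begin

text \<open>The node set is the set of
  endpoints of edges, so every node is incident to an edge.\<close>

definition src :: "('a \<times> 'a) \<Rightarrow> 'a" where "src e = fst e"
definition tgt :: "('a \<times> 'a) \<Rightarrow> 'a" where "tgt e = snd e"
definition rvec :: "((real^'d) \<times> (real^'d)) \<Rightarrow> real^'d" where "rvec e = tgt e - src e"

definition nodes :: "('a \<times> 'a) set \<Rightarrow> 'a set" where
  "nodes E = fst ` E \<union> snd ` E"

definition reaction_network :: "((real^'d) \<times> (real^'d)) set \<Rightarrow> bool" where
  "reaction_network E \<longleftrightarrow> finite E \<and> nodes E \<noteq> {}
     \<and> (\<forall>y\<in>nodes E. \<forall>i. 0 \<le> y $ i)
     \<and> (\<forall>e\<in>E. src e \<noteq> tgt e)"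

definition consistent :: "((real^'d) \<times> (real^'d)) set \<Rightarrow> bool" where
  "consistent E \<longleftrightarrow> (\<exists>a :: ((real^'d) \<times> (real^'d)) \<Rightarrow> real.
      (\<forall>e\<in>E. a e > 0) \<and> (\<Sum>e\<in>E. a e *\<^sub>R rvec e) = 0)"

definition endotactic :: "((real^'d) \<times> (real^'d)) set \<Rightarrow> bool" where
  "endotactic E \<longleftrightarrow> (\<forall>w :: real^'d. \<forall>ei\<in>E. w \<bullet> rvec ei < 0 \<longrightarrow>
      (\<exists>ej\<in>E. w \<bullet> (src ej - src ei) < 0 \<and> w \<bullet> rvec ej > 0))"

end

theory Submission
  imports Defs
begin

lemma cone_rep:
  fixes V :: "'a::euclidean_space set"
  assumes "finite V" "z \<in> conic hull (convex hull V)"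
  shows "\<exists>\<beta>. (\<forall>y\<in>V. 0 \<le> \<beta> y) \<and> z = (\<Sum>y\<in>V. \<beta> y *\<^sub>R y)"
proof -
  obtain c x where cx: "z = c *\<^sub>R x" "0 \<le> c" "x \<in> convex hull V"
    using assms(2) by (auto simp: conic_hull_explicit)
  then obtain u where u: "\<forall>y\<in>V. 0 \<le> u y" "(\<Sum>y\<in>V. u y *\<^sub>R y) = x"
    using convex_hull_finite[OF assms(1)] by auto
  show ?thesis
    apply (rule exI[of _ "\<lambda>y. c * u y"])
    using u cx by (auto simp: scaleR_sum_right)
qed

lemma stiemke_V:
  fixes V :: "'a::euclidean_space set"
  assumes fin: "finite V" and ne: "V \<noteq> {}"
    and noW: "\<And>w. (\<forall>y\<in>V. 0 \<le> w \<bullet> y) \<Longrightarrow> (\<forall>y\<in>V. w \<bullet> y = 0)"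
  shows "\<exists>\<alpha>. (\<forall>y\<in>V. 0 < \<alpha> y) \<and> (\<Sum>y\<in>V. \<alpha> y *\<^sub>R y) = 0"
proof -
  define K where "K = conic hull (convex hull V)"
  have cK: "closed K" unfolding K_def
    by (rule closed_conic_hull_strong) (simp add: fin polytope_convex_hull)
  have vK: "convex K" unfolding K_def by (simp add: convex_conic_hull)
  have VK: "y \<in> K" if "y \<in> V" for y
    unfolding K_def using that by (meson hull_inc subsetD hull_subset)
  have conK: "conic K" unfolding K_def by (rule conic_conic_hull)
  have 0: "0 \<in> K" using VK ne conK conic_contains_0 by blast
  have negK: "- x \<in> K" if x: "x \<in> V" for x
  proof (rule ccontr)
    assume "- x \<notin> K"
    then obtain a b where ab: "a \<bullet> (- x) < b" "\<forall>z\<in>K. b < a \<bullet> z"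
      using separating_hyperplane_closed_point[OF vK cK] by blast
    have b0: "b < 0" using ab(2) 0 by auto
    have "0 \<le> a \<bullet> y" if y: "y \<in> V" for y
    proof (rule ccontr)
      assume neg: "\<not> 0 \<le> a \<bullet> y"
      define c where "c = b / (a \<bullet> y)"
      have c0: "0 \<le> c" unfolding c_def using neg b0 by (simp add: divide_nonpos_neg)
      have "c *\<^sub>R y \<in> K" using conK VK[OF y] c0 by (simp add: conic_def)
      hence "b < a \<bullet> (c *\<^sub>R y)" using ab(2) by blast
      also have "\<dots> = b" unfolding c_def using neg by simp
      finally show False by simp
    qed
    hence "a \<bullet> x = 0" using noW x by blast
    thus False using ab b0 by simp
  qed
  have "\<forall>x\<in>V. \<exists>\<beta>. (\<forall>y\<in>V. 0 \<le> \<beta> y) \<and> - x = (\<Sum>y\<in>V. \<beta> y *\<^sub>R y)"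
    using negK cone_rep[OF fin] unfolding K_def by blast
  then obtain \<beta> where \<beta>: "\<And>x. x \<in> V \<Longrightarrow> (\<forall>y\<in>V. 0 \<le> \<beta> x y) \<and> - x = (\<Sum>y\<in>V. \<beta> x y *\<^sub>R y)"
    by metis
  define \<alpha> where "\<alpha> y = 1 + (\<Sum>x\<in>V. \<beta> x y)" for y
  have pos: "\<forall>y\<in>V. 0 < \<alpha> y"
    unfolding \<alpha>_def using \<beta> by (auto intro!: add_pos_nonneg sum_nonneg)
  have "(\<Sum>y\<in>V. \<alpha> y *\<^sub>R y) = (\<Sum>y\<in>V. y) + (\<Sum>y\<in>V. \<Sum>x\<in>V. \<beta> x y *\<^sub>R y)"
    unfolding \<alpha>_def by (simp add: scaleR_add_left sum.distrib scaleR_sum_left)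
  also have "(\<Sum>y\<in>V. \<Sum>x\<in>V. \<beta> x y *\<^sub>R y) = (\<Sum>x\<in>V. \<Sum>y\<in>V. \<beta> x y *\<^sub>R y)"
    by (rule sum.swap)
  also have "\<dots> = (\<Sum>x\<in>V. - x)" using \<beta> by (auto intro!: sum.cong)
  finally have "(\<Sum>y\<in>V. \<alpha> y *\<^sub>R y) = 0" by (simp add: sum_negf)
  thus ?thesis using pos by blast
qed

theorem lemma5:
  fixes E :: "((real^'d) \<times> (real^'d)) set"
  assumes "reaction_network E" and "endotactic E"
  shows "consistent E"
proof -
  have fin: "finite E" and ne: "E \<noteq> {}"
    using assms(1) by (auto simp: reaction_network_def nodes_def)
  define V where "V = rvec ` E"
  have finV: "finite V" "V \<noteq> {}" using fin ne by (auto simp: V_def)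
  have noW: "\<forall>y\<in>V. w \<bullet> y = 0" if h: "\<forall>y\<in>V. 0 \<le> w \<bullet> y" for w
  proof (rule ccontr)
    assume "\<not> (\<forall>y\<in>V. w \<bullet> y = 0)"
    then obtain e where e: "e \<in> E" "w \<bullet> rvec e \<noteq> 0" by (auto simp: V_def)
    hence "(- w) \<bullet> rvec e < 0" using h by (force simp: V_def)
    then obtain ej where "ej \<in> E" "(- w) \<bullet> rvec ej > 0"
      using assms(2) e(1) unfolding endotactic_def by blast
    thus False using h by (force simp: V_def)
  qed
  obtain \<alpha> where \<alpha>: "\<forall>y\<in>V. 0 < \<alpha> y" "(\<Sum>y\<in>V. \<alpha> y *\<^sub>R y) = 0"
    using stiemke_V[OF finV noW] by blast
  define n where "n x = real (card {f\<in>E. rvec f = x})" for x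
  have npos: "n x > 0" if "x \<in> V" for x
    using that fin by (auto simp: n_def V_def card_gt_0_iff)
  define a where "a f = \<alpha> (rvec f) / n (rvec f)" for f
  have apos: "\<forall>e\<in>E. a e > 0" using \<alpha>(1) npos by (auto simp: a_def V_def)
  have "(\<Sum>e\<in>E. a e *\<^sub>R rvec e) = (\<Sum>x\<in>V. \<Sum>e\<in>{f\<in>E. rvec f = x}. a e *\<^sub>R rvec e)"
    unfolding V_def by (rule sum.image_gen[OF fin])
  also have "\<dots> = (\<Sum>x\<in>V. \<Sum>e\<in>{f\<in>E. rvec f = x}. (\<alpha> x / n x) *\<^sub>R x)"
    by (auto simp: a_def intro!: sum.cong)
  also have "\<dots> = (\<Sum>x\<in>V. \<alpha> x *\<^sub>R x)"
  proof (rule sum.cong[OF refl])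
    fix x assume "x \<in> V"
    hence "n x > 0" by (rule npos)
    thus "(\<Sum>e\<in>{f\<in>E. rvec f = x}. (\<alpha> x / n x) *\<^sub>R x) = \<alpha> x *\<^sub>R x"
    proof -
      have "(\<Sum>e\<in>{f\<in>E. rvec f = x}. (\<alpha> x / n x) *\<^sub>R x) = real (card {f\<in>E. rvec f = x}) *\<^sub>R ((\<alpha> x / n x) *\<^sub>R x)"
        by (rule sum_constant_scaleR)
      also have "real (card {f\<in>E. rvec f = x}) = n x" by (simp add: n_def)
      also have "n x *\<^sub>R ((\<alpha> x / n x) *\<^sub>R x) = (n x * (\<alpha> x / n x)) *\<^sub>R x"
        by (rule scaleR_scaleR)
      also have "n x * (\<alpha> x / n x) = \<alpha> x" using \<open>n x > 0\<close> by simp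
      finally show ?thesis .
    qed
  qed
  also have "\<dots> = 0" by (rule \<alpha>(2))
  finally have "(\<Sum>e\<in>E. a e *\<^sub>R rvec e) = 0" .
  thus ?thesis using apos unfolding consistent_def by blast
qed

end
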